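(* Consider the system \[ \begin{aligned} S_{msm}' &= \Pi_{msm} - a_{msm}(1-\varepsilon_{msm})\Big[\eta_{msm}\beta_M^M \tfrac{I_{msm}}{N^*_{msm}} + (1-\eta_{msm})\beta_F^M \tfrac{I_{hetf}}{N^*_{hetf}}\Big]S_{msm} - \mu S_{msm},\\ I_{msm}' &= a_{msm}(1-\varepsilon_{msm})\Big[\eta_{msm}\beta_M^M \tfrac{I_{msm}}{N^*_{msm}} + (1-\eta_{msm})\beta_F^M \tfrac{I_{hetf}}{N^*_{hetf}}\Big]S_{msm} - \mu I_{msm},\\ S_{hetf}' &= \Pi_{hetf} - a_{hetf}(1-\varepsilon_{hetf})\beta_M^F\Big[\alpha_{hetf}\tfrac{I_{msm}}{N^*_{msm}} + (1-\alpha_{hetf})\tfrac{I_{hetm}}{N^*_{hetm}}\Big]S_{hetf} - \mu S_{hetf},\\ I_{hetf}' &= a_{hetf}(1-\varepsilon_{hetf})\beta_M^F\Big[\alpha_{hetf}\tfrac{I_{msm}}{N^*_{msm}} + (1-\alpha_{hetf})\tfrac{I_{hetm}}{N^*_{hetm}}\Big]S_{hetf} - \mu I_{hetf},\\ S_{hetm}' &= \Pi_{hetm} - a_{hetm}(1-\varepsilon_{hetm})\beta_F^M \tfrac{I_{hetf}}{N^*_{hetf}} S_{hetm} - \mu S_{hetm},\\ I_{hetm}' &= a_{hetm}(1-\varepsilon_{hetm})\beta_F^M \tfrac{I_{hetf}}{N^*_{hetf}} S_{hetm} - \mu I_{hetm}, \end{aligned} \] where $N_j^*=S_j^*=\Pi_j/\mu$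 for $j\in\{msm,hetf,hetm\}$. Let $\mathcal{E}_0$ be the disease-free equilibrium ($S_j=S_j^*$, $I_j=0$), let \[ \Omega^*=\{(S_{msm},I_{msm},S_{hetf},I_{hetf},S_{hetm},I_{hetm})\in\mathbb{R}^6_+ : S_{msm}+I_{msm}+S_{hetf}+I_{hetf}+S_{hetm}+I_{hetm}\le \Pi/\mu,\ S_j\le S_j^* \text{ for all } j\}, \] with $\Pi=\Pi_{msm}+\Pi_{hetf}+\Pi_{hetm}$, and let $\widehat{\mathbb{R}}_c=\rho(F\widehat V^{-1})$, where $\widehat V=\mu I_3$ and $F=\begin{bmatrix} f_{11} & f_{12} & 0\\ f_{21} & 0 & f_{23}\\ 0 & f_{32} & 0\end{bmatrix}$ with $f_{11}=a_{msm}(1-\varepsilon_{msm})\eta_{msm}\beta_M^M S_{msm}^*/N_{msm}^*$, $f_{12}=a_{msm}(1-\varepsilon_{msm})(1-\eta_{msm})\beta_F^M S_{msm}^*/N_{hetf}^*$, $f_{21}=a_{hetf}(1-\varepsilon_{hetf})\alpha_{hetf}\beta_M^F S_{hetf}^*/N_{msm}^*$, $f_{23}=a_{hetf}(1-\varepsilon_{hetf})(1-\alpha_{hetf})\beta_M^F S_{hetf}^*/N_{hetm}^*$, $f_{32}=a_{hetm}(1-\varepsilon_{hetm})\beta_F^M S_{hetm}^*/N_{hetf}^*$. If $\widehat{\mathbb{R}}_c<1$, then $\mathcal{E}_0$ is globally asymptotically stable in $\Omega^*$.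
   Context: This is the special case, with no disease-induced mortality ($\delta_j=0$), of an HIV transmission model for men who have sex with men (msm), heterosexual females (hetf) and heterosexual males (hetm), in which (as the paper does for this special case) each group's total population $N_j(t)=S_j+I_j$, which satisfies $N_j'=\Pi_j-\mu N_j$ and hence tends to $\Pi_j/\mu$, is replaced in the incidence terms by its limiting value $N_j^*=\Pi_j/\mu$. Parameters: $\Pi_j>0$, $a_j>0$, $\varepsilon_j\in[0,1]$, $\mu>0$, $\beta_M^M,\beta_F^M,\beta_M^F\in[0,1]$, $\eta_{msm},\alpha_{hetf}\in[0,1]$; $\rho$ is the spectral radius. *)

theory Defs
  imports "HOL-Analysis.Analysis" "Jordan_Normal_Form.Spectral_Radius"
begin

text \<open>Model parameters (special case delta_j = 0).
  Suffixes: m = msm, f = hetf, h = hetm.\<close>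
record hiv_params =
  Pi_m :: real  Pi_f :: real  Pi_h :: real
  a_m :: real   a_f :: real   a_h :: real
  eps_m :: real eps_f :: real eps_h :: real
  mu :: real
  bMM :: real
  bFM :: real
  bMF :: real
  eta :: real
  alpha :: real

definition admissible :: "hiv_params \<Rightarrow> bool" where
  "admissible p \<longleftrightarrow>
     Pi_m p > 0 \<and> Pi_f p > 0 \<and> Pi_h p > 0 \<and>
     a_m p > 0 \<and> a_f p > 0 \<and> a_h p > 0 \<and>
     eps_m p \<in> {0..1} \<and> eps_f p \<in> {0..1} \<and> eps_h p \<in> {0..1} \<and>
     mu p > 0 \<and>
     bMM p \<in> {0..1} \<and> bFM p \<in> {0..1} \<and> bMF p \<in> {0..1} \<and>
     eta p \<in> {0..1} \<and> alpha p \<in> {0..1}"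

definition Nm :: "hiv_params \<Rightarrow> real" where "Nm p = Pi_m p / mu p"
definition Nf :: "hiv_params \<Rightarrow> real" where "Nf p = Pi_f p / mu p"
definition Nh :: "hiv_params \<Rightarrow> real" where "Nh p = Pi_h p / mu p"

type_synonym state = "real \<times> real \<times> real \<times> real \<times> real \<times> real"
  \<comment> \<open>(S_msm, I_msm, S_hetf, I_hetf, S_hetm, I_hetm)\<close>

definition field :: "hiv_params \<Rightarrow> state \<Rightarrow> state" where
  "field p x = (case x of (sM, iM, sF, iF, sH, iH) \<Rightarrow>
     (let lm = a_m p * (1 - eps_m p) *
               (eta p * bMM p * iM / Nm p + (1 - eta p) * bFM p * iF / Nf p);
          lf = a_f p * (1 - eps_f p) * bMF p *
               (alpha p * iM / Nm p + (1 - alpha p) * iH / Nh p);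
          lh = a_h p * (1 - eps_h p) * bFM p * iF / Nf p
      in (Pi_m p - lm * sM - mu p * sM,
          lm * sM - mu p * iM,
          Pi_f p - lf * sF - mu p * sF,
          lf * sF - mu p * iF,
          Pi_h p - lh * sH - mu p * sH,
          lh * sH - mu p * iH)))"

definition dfe :: "hiv_params \<Rightarrow> state" where
  "dfe p = (Nm p, 0, Nf p, 0, Nh p, 0)"

definition Omega_star :: "hiv_params \<Rightarrow> state set" where
  "Omega_star p = {(sM, iM, sF, iF, sH, iH).
     0 \<le> sM \<and> 0 \<le> iM \<and> 0 \<le> sF \<and> 0 \<le> iF \<and> 0 \<le> sH \<and> 0 \<le> iH \<and>
     sM + iM + sF + iF + sH + iH \<le> (Pi_m p + Pi_f p + Pi_h p) / mu p \<and>
     sM \<le> Nm p \<and> sF \<le> Nf p \<and> sH \<le> Nh p}"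

definition is_solution :: "hiv_params \<Rightarrow> (real \<Rightarrow> state) \<Rightarrow> bool" where
  "is_solution p x \<longleftrightarrow>
     (\<forall>t\<ge>0. (x has_vector_derivative field p (x t)) (at t within {0..}))"

definition GAS_in :: "hiv_params \<Rightarrow> state \<Rightarrow> state set \<Rightarrow> bool" where
  "GAS_in p e D \<longleftrightarrow>
     (\<forall>\<epsilon>>0. \<exists>\<delta>>0. \<forall>x. is_solution p x \<and> x 0 \<in> D \<and> dist (x 0) e < \<delta> \<longrightarrow>
          (\<forall>t\<ge>0. dist (x t) e < \<epsilon>)) \<and>
     (\<forall>x. is_solution p x \<and> x 0 \<in> D \<longrightarrow> (x \<longlongrightarrow> e) at_top)"

definition Fmat :: "hiv_params \<Rightarrow> real mat" where
  "Fmat p = mat_of_rows_list 3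
     [[a_m p * (1 - eps_m p) * eta p * bMM p * Nm p / Nm p,
       a_m p * (1 - eps_m p) * (1 - eta p) * bFM p * Nm p / Nf p, 0],
      [a_f p * (1 - eps_f p) * alpha p * bMF p * Nf p / Nm p, 0,
       a_f p * (1 - eps_f p) * (1 - alpha p) * bMF p * Nf p / Nh p],
      [0, a_h p * (1 - eps_h p) * bFM p * Nh p / Nf p, 0]]"

text \<open>V-hat = mu I_3, so V-hat inverse = (1/mu) I_3.\<close>
definition Vhat_inv :: "hiv_params \<Rightarrow> real mat" where
  "Vhat_inv p = (1 / mu p) \<cdot>\<^sub>m 1\<^sub>m 3"

definition Rc_hat :: "hiv_params \<Rightarrow> real" where
  "Rc_hat p = spectral_radius (map_mat complex_of_real (Fmat p * Vhat_inv p))"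

end

theory Submission
  imports Defs
begin


lemma eig3:
  fixes a b c d e lam :: real
  assumes M: "M = mat_of_rows_list 3 [[complex_of_real a, complex_of_real b, 0],[complex_of_real c,0,complex_of_real d],[0,complex_of_real e,0]]"
  and v: "v = vec_of_list [complex_of_real v1, complex_of_real v2, complex_of_real v3]"
  and nz: "v1 \<noteq> 0 \<or> v2 \<noteq> 0 \<or> v3 \<noteq> 0"
  and r1: "a * v1 + b * v2 = lam * v1" and r2: "c * v1 + d * v3 = lam * v2" and r3: "e * v2 = lam * v3"
  shows "lam \<le> spectral_radius M"
proof -
  have car: "M \<in> carrier_mat 3 3"
  proof -
    have "length [[complex_of_real a, complex_of_real b, 0],[complex_of_real c,0,complex_of_real d],[0,complex_of_real e,0]] = 3" by simp
    thus ?thesis unfolding M mat_of_rows_list_def by (metis mat_carrier)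
  qed
  have "M *\<^sub>v v = complex_of_real lam \<cdot>\<^sub>v v"
  proof (rule eq_vecI)
    fix i assume "i < dim_vec (complex_of_real lam \<cdot>\<^sub>v v)"
    hence i: "i < 3" using v by simp
    have "(M *\<^sub>v v) $ i = row M i \<bullet> v" using car i by simp
    also have "\<dots> = (\<Sum>j<3. M $$ (i,j) * v $ j)" 
    proof -
      have dv: "dim_vec v = 3" using v by simp
      show ?thesis using car i by (simp add: scalar_prod_def dv lessThan_atLeast0)
    qed
    also have "\<dots> = (complex_of_real lam \<cdot>\<^sub>v v) $ i"
    proof -
      have s3: "\<And>f::nat\<Rightarrow>complex. (\<Sum>j<3. f j) = f 0 + f (Suc 0) + f (Suc (Suc 0))"
        by (simp add: numeral_3_eq_3 numeral_2_eq_2)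
      have e: "M $$ (0,0) = complex_of_real a" "M $$ (0,Suc 0) = complex_of_real b" "M $$ (0,Suc (Suc 0)) = 0"
        "M $$ (Suc 0,0) = complex_of_real c" "M $$ (Suc 0,Suc 0) = 0" "M $$ (Suc 0,Suc (Suc 0)) = complex_of_real d"
        "M $$ (Suc (Suc 0),0) = 0" "M $$ (Suc (Suc 0),Suc 0) = complex_of_real e" "M $$ (Suc (Suc 0),Suc (Suc 0)) = 0"
        unfolding M mat_of_rows_list_def by (simp_all add: numeral_2_eq_2)
      have vv: "v $ 0 = complex_of_real v1" "v $ Suc 0 = complex_of_real v2" "v $ Suc (Suc 0) = complex_of_real v3"
        unfolding v by (simp_all add: numeral_2_eq_2)
      have lv: "(complex_of_real lam \<cdot>\<^sub>v v) $ j = complex_of_real lam * v $ j" if "j < 3" for j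
        using that v by simp
      from i have "i = 0 \<or> i = Suc 0 \<or> i = Suc (Suc 0)" by auto
      then show ?thesis
      proof (elim disjE)
        assume ii: "i = 0"
        show ?thesis using r1 i unfolding s3 lv[OF i] unfolding ii e vv by (simp flip: of_real_mult of_real_add)
      next
        assume ii: "i = Suc 0"
        show ?thesis using r2 i unfolding s3 lv[OF i] unfolding ii e vv by (simp flip: of_real_mult of_real_add)
      next
        assume ii: "i = Suc (Suc 0)"
        show ?thesis using r3 i unfolding s3 lv[OF i] unfolding ii e vv by (simp flip: of_real_mult of_real_add)
      qed
    qed
    finally show "(M *\<^sub>v v) $ i = (complex_of_real lam \<cdot>\<^sub>v v) $ i" .
  qed (use car v in simp)
  moreover have "v \<noteq> 0\<^sub>v 3"
  proof
    assume "v = 0\<^sub>v 3"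
    hence "v $ 0 = 0" "v $ Suc 0 = 0" "v $ Suc (Suc 0) = 0" by auto
    thus False using nz unfolding v by simp

  qed
  moreover have "v \<in> carrier_vec 3"
  proof -
    have "dim_vec v = 3" using v by simp
    thus ?thesis by (rule carrier_vecI)
  qed
  moreover have "dim_row M = 3" using car by simp
  ultimately have "eigenvector M v (complex_of_real lam)"
    unfolding eigenvector_def by simp
  hence "eigenvalue M (complex_of_real lam)" unfolding eigenvalue_def by blast
  hence "complex_of_real lam \<in> spectrum M" unfolding spectrum_def by simp
  hence "norm (complex_of_real lam) \<in> norm ` spectrum M" by (rule imageI)
  hence "norm (complex_of_real lam) \<le> spectral_radius M"
    by (rule spectral_radius_mem_max(2)[OF car, of "norm (complex_of_real lam)", rotated]) simp
  thus ?thesis by simp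
qed

lemma spec_cond:
  fixes a b c d e :: real
  assumes M: "M = mat_of_rows_list 3 [[complex_of_real a, complex_of_real b, 0],[complex_of_real c,0,complex_of_real d],[0,complex_of_real e,0]]"
  and nn: "a \<ge> 0" "b \<ge> 0" "c \<ge> 0" "d \<ge> 0" "e \<ge> 0"
  and rho: "spectral_radius M < 1"
  shows "a < 1 \<and> (1 - a) * (1 - d * e) - b * c > 0"
proof -
  define P where "P = (\<lambda>l::real. (l - a) * (l * l - d * e) - b * c * l)"
  have noroot: False if l1: "l \<ge> 1" and pl: "P l = 0" for l
  proof -
    have "l \<le> spectral_radius M"
    proof (cases "c = 0")
      case False
      show ?thesis
        by (rule eig3[OF M refl, of "(l * l - d * e) / c" l e]) 
           (use False l1 pl in \<open>auto simp: P_def field_simps\<close>)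
    next
      case c0: True
      show ?thesis
      proof (cases "l = a")
        case True
        show ?thesis
          by (rule eig3[OF M refl, of 1 0 0]) (use True c0 in auto)
      next
        case False
        have "l * l = d * e" using pl c0 False by (simp add: P_def)
        thus ?thesis
          by (rule_tac eig3[OF M refl, of "b * l / (l - a)" l e])
             (use False c0 l1 in \<open>auto simp: field_simps\<close>)
      qed
    qed
    thus False using rho l1 by simp
  qed
  have pos: "P l > 0" if l1: "l \<ge> 1" for l
  proof (rule ccontr)
    assume "\<not> P l > 0"
    hence le: "P l \<le> 0" by simp
    define K where "K = l + 1 + a + d * e + b * c"
    have K1: "K \<ge> 1" "K \<ge> l" using l1 nn by (auto simp: K_def)
    have "K * K \<ge> K * (a + 1 + d * e + b * c)"
      using K1 nn l1 by (intro mult_left_mono) (auto simp: K_def)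
    hence "K * K - a * K - (d * e + b * c) \<ge> K - (d*e+b*c) + (d*e+b*c) * K - (d*e+b*c)"
      using mult_nonneg_nonneg[OF nn(2) nn(3)] mult_nonneg_nonneg[OF nn(4) nn(5)] by (simp add: algebra_simps)
    moreover have "(d*e+b*c) * K \<ge> (d*e+b*c)" using mult_left_mono[OF K1(1), of "d*e+b*c"] nn by simp
    ultimately have q: "K * K - a * K - (d * e + b * c) \<ge> K - (d*e+b*c)" by linarith
    have "P K = K * (K * K - a * K - (d * e + b * c)) + a * d * e"
      by (simp add: P_def algebra_simps)
    moreover have "K * (K * K - a * K - (d * e + b * c)) \<ge> K * (K - (d*e+b*c))"
      using q K1 by (intro mult_left_mono) auto
    moreover have "K - (d*e+b*c) \<ge> 1" using K1 l1 nn by (simp add: K_def)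
    ultimately have "P K > 0" using K1 nn
      by (smt (verit) mult_nonneg_nonneg mult_left_mono mult_cancel_left1)
    have "\<exists>x. l \<le> x \<and> x \<le> K \<and> P x = 0"
      by (rule IVT') (use le \<open>P K > 0\<close> K1 in \<open>auto simp: P_def intro!: continuous_intros\<close>)
    then obtain x where "l \<le> x" "P x = 0" by auto
    thus False using noroot[of x] l1 by linarith
  qed
  have a1: "a < 1"
  proof (rule ccontr)
    assume "\<not> a < 1"
    hence "a \<ge> 1" by simp
    from pos[OF this] have "P a > 0" .
    moreover have "P a = - b * c * a" by (simp add: P_def)
    moreover have "b * c * a \<ge> 0" using nn by simp
    ultimately show False by simp
  qed
  moreover have "P 1 > 0" using pos by simp
  hence "(1 - a) * (1 - d * e) - b * c > 0" by (simp add: P_def)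
  ultimately show ?thesis by simp
qed



lemma map_smult_rows3:
  fixes m :: real
  shows "map_mat complex_of_real (k \<cdot>\<^sub>m mat_of_rows_list 3 [[x11,x12,x13],[x21,x22,x23],[x31,x32,x33]]) =
    mat_of_rows_list 3 [[complex_of_real (k*x11),complex_of_real (k*x12),complex_of_real (k*x13)],
      [complex_of_real (k*x21),complex_of_real (k*x22),complex_of_real (k*x23)],
      [complex_of_real (k*x31),complex_of_real (k*x32),complex_of_real (k*x33)]]"
    (is "?L = ?R")
proof (rule eq_matI)
  have l3: "length [[x11,x12,x13],[x21,x22,x23],[x31,x32,x33]] = 3" by simp
  have l3': "length [[complex_of_real (k*x11),complex_of_real (k*x12),complex_of_real (k*x13)],
      [complex_of_real (k*x21),complex_of_real (k*x22),complex_of_real (k*x23)],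
      [complex_of_real (k*x31),complex_of_real (k*x32),complex_of_real (k*x33)]] = 3" by simp
  show dr: "dim_row ?L = dim_row ?R" "dim_col ?L = dim_col ?R"
    unfolding mat_of_rows_list_def by (simp_all only: index_map_mat dim_row_mat dim_col_mat index_smult_mat l3 l3')
  fix i j assume i: "i < dim_row ?R" and j: "j < dim_col ?R"
  have i3: "i < 3" and j3: "j < 3" using i j unfolding mat_of_rows_list_def
    by (simp_all only: dim_row_mat dim_col_mat l3')
  have "i = 0 \<or> i = Suc 0 \<or> i = Suc (Suc 0)" using i3 by auto
  moreover have "j = 0 \<or> j = Suc 0 \<or> j = Suc (Suc 0)" using j3 by auto
  ultimately show "?L $$ (i, j) = ?R $$ (i, j)"
    using i3 j3 unfolding mat_of_rows_list_def
    by (auto simp only: index_map_mat dim_row_mat dim_col_mat index_smult_mat index_mat l3 l3' case_prod_conv nth_Cons_0 nth_Cons_Suc)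
qed

lemma Fmat_Vinv:
  assumes "mu p > 0"
  shows "Fmat p * Vhat_inv p = (1 / mu p) \<cdot>\<^sub>m Fmat p"
proof -
  have c: "Fmat p \<in> carrier_mat 3 3"
  proof -
    have "length [[a_m p * (1 - eps_m p) * eta p * bMM p * Nm p / Nm p,
       a_m p * (1 - eps_m p) * (1 - eta p) * bFM p * Nm p / Nf p, 0],
      [a_f p * (1 - eps_f p) * alpha p * bMF p * Nf p / Nm p, 0,
       a_f p * (1 - eps_f p) * (1 - alpha p) * bMF p * Nf p / Nh p],
      [0, a_h p * (1 - eps_h p) * bFM p * Nh p / Nf p, 0]] = 3" by simp
    thus ?thesis unfolding Fmat_def mat_of_rows_list_def by (metis mat_carrier)
  qed
  show ?thesis unfolding Vhat_inv_def
    using mult_smult_distrib[OF c one_carrier_mat, of "1 / mu p"] right_mult_one_mat[OF c] by simp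
qed



lemma ev_within: "(\<And>s. s \<in> S \<Longrightarrow> P s) \<Longrightarrow> eventually P (at a within S)"
  unfolding eventually_at_filter by (rule always_eventually) auto

lemma first_exit:
  fixes g g' :: "nat \<Rightarrow> real \<Rightarrow> real" and K :: "nat set" and T M :: real
  assumes fin: "finite K"
  and der: "\<And>k t. k \<in> K \<Longrightarrow> t \<in> {0..T} \<Longrightarrow> (g k has_real_derivative g' k t) (at t within {0..T})"
  and init: "\<And>k. k \<in> K \<Longrightarrow> g k 0 \<ge> 0"
  and Mb: "\<And>k t \<eta>. k \<in> K \<Longrightarrow> t \<in> {0..T} \<Longrightarrow> \<eta> > 0 \<Longrightarrow> (\<forall>i\<in>K. g i t \<ge> - \<eta>) \<Longrightarrow> g k t = - \<eta> \<Longrightarrow> g' k t \<ge> - M * \<eta>"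
  and k: "k \<in> K" and t: "t \<in> {0..T}"
  shows "g k t \<ge> 0"
proof -
  define C where "C = \<bar>M\<bar> + 1"
  have claim: "g k t + \<delta> * exp (C * t) > 0" if d: "\<delta> > 0" and k: "k \<in> K" and t: "t \<in> {0..T}" for \<delta> k t
  proof (rule ccontr)
    assume "\<not> g k t + \<delta> * exp (C * t) > 0"
    define h where "h = (\<lambda>i s. g i s + \<delta> * exp (C * s))"
    define A where "A = (\<Union>i\<in>K. {s \<in> {0..T}. h i s \<le> 0})"
    have hder: "(h i has_real_derivative (g' i s + \<delta> * (exp (C * s) * C))) (at s within {0..T})"
      if "i \<in> K" "s \<in> {0..T}" for i s
      unfolding h_def using der[OF that]
      by (auto intro!: derivative_eq_intros)
    have hcont: "continuous_on {0..T} (h i)" if "i \<in> K" for i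
      unfolding continuous_on_eq_continuous_within
      using hder[OF that] DERIV_continuous by blast
    have "closed {s \<in> {0..T}. h i s \<le> (\<lambda>_. 0) s}" if "i \<in> K" for i
      by (rule continuous_on_closed_Collect_le[OF hcont[OF that]]) (auto intro: continuous_intros)
    hence clA: "closed A" unfolding A_def
      using fin by (intro closed_UN) auto
    have "A \<subseteq> {0..T}" unfolding A_def by auto
    hence "bounded A" using bounded_subset[OF bounded_closed_interval] by blast
    hence cA: "compact A" using clA compact_eq_bounded_closed by blast
    have "t \<in> {s \<in> {0..T}. h k s \<le> 0}" using \<open>\<not> _\<close> t unfolding h_def by simp
    hence "t \<in> A" unfolding A_def using k by blast
    hence "A \<noteq> {}" by blast
    from compact_attains_inf[OF cA this] obtain \<tau> where tA: "\<tau> \<in> A" and tmin0: "\<forall>s\<in>A. \<tau> \<le> s"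
      by blast
    have tmin: "\<tau> \<le> s" if "s \<in> A" for s using tmin0 that by blast
    from tA obtain j where j: "j \<in> K" and tT: "\<tau> \<in> {0..T}" and hj: "h j \<tau> \<le> 0" unfolding A_def by auto
    have pos: "h i s > 0" if "i \<in> K" "s \<in> {0..T}" "s < \<tau>" for i s
    proof (rule ccontr)
      assume "\<not> h i s > 0"
      hence "s \<in> {s \<in> {0..T}. h i s \<le> 0}" using that by simp
      hence "s \<in> A" using that(1) unfolding A_def by blast
      from tmin[OF this] show False using that(3) by simp
    qed
    have "\<tau> \<noteq> 0"
    proof
      assume "\<tau> = 0"
      hence "h j \<tau> = g j 0 + \<delta>" by (simp add: h_def)
      thus False using init[OF j] d hj by simp
    qed
    hence t0: "\<tau> > 0" using tT by simp
    define F where "F = at \<tau> within {0<..<\<tau>}"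
    have Fnb: "F \<noteq> bot" unfolding F_def using trivial_limit_within islimpt_greaterThanLessThan2[OF t0] by blast
    have sub: "{0<..<\<tau>} \<subseteq> {0..T}" using tT by auto
    have evpos: "eventually (\<lambda>s. h i s > 0) F" if "i \<in> K" for i
      unfolding F_def by (rule ev_within) (use pos[OF that] sub in auto)
    have hnn: "h i \<tau> \<ge> 0" if i: "i \<in> K" for i
    proof -
      have "continuous (at \<tau> within {0..T}) (h i)" using hcont[OF i] tT
        by (simp add: continuous_on_eq_continuous_within)
      hence "(h i \<longlongrightarrow> h i \<tau>) F" unfolding F_def continuous_within
        by (rule tendsto_within_subset[OF _ sub])
      moreover have "eventually (\<lambda>s. 0 \<le> h i s) F"
        using evpos[OF i] by (rule eventually_mono) simp
      ultimately show ?thesis using Fnb by (rule tendsto_lowerbound)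
    qed
    have hj0: "h j \<tau> = 0" using hnn[OF j] hj by simp
    define D where "D = g' j \<tau> + \<delta> * (exp (C * \<tau>) * C)"
    have "(h j has_real_derivative D) (at \<tau> within {0<..<\<tau>})"
      unfolding D_def using hder[OF j tT] sub by (rule DERIV_subset)
    hence "((\<lambda>s. (h j s - h j \<tau>) / (s - \<tau>)) \<longlongrightarrow> D) F"
      unfolding F_def has_field_derivative_iff .
    moreover have "eventually (\<lambda>s. (h j s - h j \<tau>) / (s - \<tau>) \<le> 0) F"
      unfolding F_def
    proof (rule ev_within)
      fix s assume s: "s \<in> {0<..<\<tau>}"
      hence "h j s > 0" using pos[OF j] sub by auto
      moreover have "s - \<tau> < 0" using s by simp
      ultimately show "(h j s - h j \<tau>) / (s - \<tau>) \<le> 0" using hj0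
        by (simp add: divide_nonneg_neg)
    qed
    ultimately have D0: "D \<le> 0" using Fnb by (rule tendsto_upperbound)
    define \<eta> where "\<eta> = \<delta> * exp (C * \<tau>)"
    have eta: "\<eta> > 0" using d by (simp add: \<eta>_def)
    have "\<forall>i\<in>K. g i \<tau> \<ge> - \<eta>"
    proof
      fix i assume "i \<in> K"
      from hnn[OF this] show "g i \<tau> \<ge> - \<eta>" unfolding h_def \<eta>_def by linarith
    qed
    moreover have "g j \<tau> = - \<eta>" using hj0 by (simp add: h_def \<eta>_def)
    ultimately have "g' j \<tau> \<ge> - M * \<eta>" using Mb[OF j tT eta] by blast
    hence "D \<ge> - M * \<eta> + C * \<eta>" by (simp add: D_def \<eta>_def algebra_simps)
    moreover have "- M * \<eta> + C * \<eta> > 0"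
    proof -
      have "- M * \<eta> + C * \<eta> = (C - M) * \<eta>" by (simp add: algebra_simps)
      moreover have "C - M > 0" unfolding C_def by linarith
      ultimately show ?thesis using eta by simp
    qed
    ultimately show False using D0 by linarith
  qed
  show ?thesis
  proof (rule ccontr)
    assume "\<not> g k t \<ge> 0"
    hence neg: "g k t < 0" by simp
    define \<delta> where "\<delta> = - g k t / (2 * exp (C * t))"
    have "\<delta> > 0" using neg unfolding \<delta>_def by (intro divide_pos_pos) auto
    from claim[OF this k t] have "g k t + \<delta> * exp (C * t) > 0" .
    moreover have "g k t + \<delta> * exp (C * t) = g k t / 2" by (simp add: \<delta>_def)
    ultimately show False using neg by simp
  qed
qed



lemma decay:
  fixes f f' :: "real \<Rightarrow> real" and \<kappa> t :: real
  assumes der: "\<And>s. s \<ge> 0 \<Longrightarrow> (f has_real_derivative f' s) (at s within {0..})"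
    and ineq: "\<And>s. s \<ge> 0 \<Longrightarrow> f' s \<le> - \<kappa> * f s" and t: "t \<ge> 0"
  shows "f t \<le> f 0 * exp (- \<kappa> * t)"
proof -
  define h where "h = (\<lambda>s. - (f s * exp (\<kappa> * s)))"
  have hder: "(h has_real_derivative - (f' s * exp (\<kappa> * s) + f s * (exp (\<kappa> * s) * \<kappa>))) (at s within {0..})"
    if "s \<ge> 0" for s
    unfolding h_def using der[OF that] by (auto intro!: derivative_eq_intros)
  have "h 0 \<le> h t"
  proof (rule DERIV_nonneg_imp_increasing_open[OF t])
    fix s assume s: "0 < s" "s < t"
    have "(h has_real_derivative - (f' s * exp (\<kappa> * s) + f s * (exp (\<kappa> * s) * \<kappa>))) (at s within {0<..})"
      by (rule DERIV_subset[OF hder[of s]]) (use s in auto)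
    moreover have "at s within {0<..} = at s" by (rule at_within_open) (use s in auto)
    ultimately have "DERIV h s :> - (f' s * exp (\<kappa> * s) + f s * (exp (\<kappa> * s) * \<kappa>))" by metis
    moreover have "- (f' s * exp (\<kappa> * s) + f s * (exp (\<kappa> * s) * \<kappa>)) \<ge> 0"
    proof -
      have "f' s + \<kappa> * f s \<le> 0" using ineq[of s] s by simp
      hence "(f' s + \<kappa> * f s) * exp (\<kappa> * s) \<le> 0" by (simp add: mult_nonpos_nonneg)
      thus ?thesis by (simp add: algebra_simps)
    qed
    ultimately show "\<exists>y. DERIV h s :> y \<and> y \<ge> 0" by blast
  next
    show "continuous_on {0..t} h"
      unfolding continuous_on_eq_continuous_within
    proof
      fix s assume "s \<in> {0..t}"
      hence "s \<ge> 0" by simp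
      hence "continuous (at s within {0..}) h" by (rule DERIV_continuous[OF hder])
      moreover have "{0..t} \<subseteq> {0..}" by auto
      ultimately show "continuous (at s within {0..t}) h" by (rule continuous_within_subset)
    qed
  qed
  hence "f t * exp (\<kappa> * t) \<le> f 0" by (simp add: h_def)
  hence "f t * exp (\<kappa> * t) * exp (- \<kappa> * t) \<le> f 0 * exp (- \<kappa> * t)"
    by (rule mult_right_mono) simp
  moreover have "exp (\<kappa> * t) * exp (- \<kappa> * t) = 1" by (simp flip: exp_add)
  ultimately show ?thesis by (metis mult.assoc mult.right_neutral)
qed


definition c11 :: "hiv_params \<Rightarrow> real" where "c11 p = a_m p * (1 - eps_m p) * eta p * bMM p / Nm p"
definition c12 :: "hiv_params \<Rightarrow> real" where "c12 p = a_m p * (1 - eps_m p) * (1 - eta p) * bFM p / Nf p"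
definition c21 :: "hiv_params \<Rightarrow> real" where "c21 p = a_f p * (1 - eps_f p) * bMF p * alpha p / Nm p"
definition c23 :: "hiv_params \<Rightarrow> real" where "c23 p = a_f p * (1 - eps_f p) * bMF p * (1 - alpha p) / Nh p"
definition c32 :: "hiv_params \<Rightarrow> real" where "c32 p = a_h p * (1 - eps_h p) * bFM p / Nf p"

lemma adm_facts:
  assumes "admissible p"
  shows "Nm p > 0" "Nf p > 0" "Nh p > 0" "mu p > 0" "Pi_m p > 0" "Pi_f p > 0" "Pi_h p > 0"
    "c11 p \<ge> 0" "c12 p \<ge> 0" "c21 p \<ge> 0" "c23 p \<ge> 0" "c32 p \<ge> 0"
    "mu p * Nm p = Pi_m p" "mu p * Nf p = Pi_f p" "mu p * Nh p = Pi_h p"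
  using assms unfolding admissible_def Nm_def Nf_def Nh_def c11_def c12_def c21_def c23_def c32_def
  by (auto intro!: divide_nonneg_pos mult_nonneg_nonneg)

lemma field_expl:
  assumes "admissible p"
  shows "field p (s1, i1, s2, i2, s3, i3) =
    (Pi_m p - (c11 p * i1 + c12 p * i2) * s1 - mu p * s1,
     (c11 p * i1 + c12 p * i2) * s1 - mu p * i1,
     Pi_f p - (c21 p * i1 + c23 p * i3) * s2 - mu p * s2,
     (c21 p * i1 + c23 p * i3) * s2 - mu p * i2,
     Pi_h p - (c32 p * i2) * s3 - mu p * s3,
     (c32 p * i2) * s3 - mu p * i3)"
proof -
  have l1: "a_m p * (1 - eps_m p) * (eta p * bMM p * i1 / Nm p + (1 - eta p) * bFM p * i2 / Nf p)
      = c11 p * i1 + c12 p * i2" unfolding c11_def c12_def using adm_facts[OF assms] by (simp add: field_simps)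
  have l2: "a_f p * (1 - eps_f p) * bMF p * (alpha p * i1 / Nm p + (1 - alpha p) * i3 / Nh p)
      = c21 p * i1 + c23 p * i3" unfolding c21_def c23_def using adm_facts[OF assms] by (simp add: field_simps)
  have l3: "a_h p * (1 - eps_h p) * bFM p * i2 / Nf p = c32 p * i2" unfolding c32_def by simp
  show ?thesis unfolding field_def Let_def prod.case l1 l2 l3 by (rule refl)
qed

definition cS1 :: "(real \<Rightarrow> state) \<Rightarrow> real \<Rightarrow> real" where "cS1 x t = fst (x t)"
definition cI1 :: "(real \<Rightarrow> state) \<Rightarrow> real \<Rightarrow> real" where "cI1 x t = fst (snd (x t))"
definition cS2 :: "(real \<Rightarrow> state) \<Rightarrow> real \<Rightarrow> real" where "cS2 x t = fst (snd (snd (x t)))"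
definition cI2 :: "(real \<Rightarrow> state) \<Rightarrow> real \<Rightarrow> real" where "cI2 x t = fst (snd (snd (snd (x t))))"
definition cS3 :: "(real \<Rightarrow> state) \<Rightarrow> real \<Rightarrow> real" where "cS3 x t = fst (snd (snd (snd (snd (x t)))))"
definition cI3 :: "(real \<Rightarrow> state) \<Rightarrow> real \<Rightarrow> real" where "cI3 x t = snd (snd (snd (snd (snd (x t)))))"

lemma x_split: "x t = (cS1 x t, cI1 x t, cS2 x t, cI2 x t, cS3 x t, cI3 x t)"
  unfolding cS1_def cI1_def cS2_def cI2_def cS3_def cI3_def by simp

lemma hvd_fst: "(f has_vector_derivative f') F \<Longrightarrow> ((\<lambda>t. fst (f t)) has_vector_derivative fst f') F"
  unfolding has_vector_derivative_def by (drule has_derivative_fst) simp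
lemma hvd_snd: "(f has_vector_derivative f') F \<Longrightarrow> ((\<lambda>t. snd (f t)) has_vector_derivative snd f') F"
  unfolding has_vector_derivative_def by (drule has_derivative_snd) simp

lemma comp_derivs:
  assumes adm: "admissible p" and sol: "is_solution p x" and t: "t \<ge> 0"
  defines "L1 \<equiv> c11 p * cI1 x t + c12 p * cI2 x t"
    and "L2 \<equiv> c21 p * cI1 x t + c23 p * cI3 x t"
    and "L3 \<equiv> c32 p * cI2 x t"
  shows "(cS1 x has_real_derivative (Pi_m p - L1 * cS1 x t - mu p * cS1 x t)) (at t within {0..})"
    "(cI1 x has_real_derivative (L1 * cS1 x t - mu p * cI1 x t)) (at t within {0..})"
    "(cS2 x has_real_derivative (Pi_f p - L2 * cS2 x t - mu p * cS2 x t)) (at t within {0..})"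
    "(cI2 x has_real_derivative (L2 * cS2 x t - mu p * cI2 x t)) (at t within {0..})"
    "(cS3 x has_real_derivative (Pi_h p - L3 * cS3 x t - mu p * cS3 x t)) (at t within {0..})"
    "(cI3 x has_real_derivative (L3 * cS3 x t - mu p * cI3 x t)) (at t within {0..})"
proof -
  have d: "(x has_vector_derivative field p (x t)) (at t within {0..})"
    using sol t unfolding is_solution_def by blast
  have fx: "field p (x t) = (Pi_m p - L1 * cS1 x t - mu p * cS1 x t, L1 * cS1 x t - mu p * cI1 x t,
     Pi_f p - L2 * cS2 x t - mu p * cS2 x t, L2 * cS2 x t - mu p * cI2 x t,
     Pi_h p - L3 * cS3 x t - mu p * cS3 x t, L3 * cS3 x t - mu p * cI3 x t)"
    unfolding L1_def L2_def L3_def by (subst x_split) (rule field_expl[OF adm])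
  note d' = d[unfolded fx]
  have e1: "cS1 x = (\<lambda>t. fst (x t))" by (simp add: cS1_def fun_eq_iff)
  have e2: "cI1 x = (\<lambda>t. fst (snd (x t)))" by (simp add: cI1_def fun_eq_iff)
  have e3: "cS2 x = (\<lambda>t. fst (snd (snd (x t))))" by (simp add: cS2_def fun_eq_iff)
  have e4: "cI2 x = (\<lambda>t. fst (snd (snd (snd (x t)))))" by (simp add: cI2_def fun_eq_iff)
  have e5: "cS3 x = (\<lambda>t. fst (snd (snd (snd (snd (x t))))))" by (simp add: cS3_def fun_eq_iff)
  have e6: "cI3 x = (\<lambda>t. snd (snd (snd (snd (snd (x t))))))" by (simp add: cI3_def fun_eq_iff)
  note s1 = hvd_snd[OF d']
  note s2 = hvd_snd[OF s1]
  note s3 = hvd_snd[OF s2]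
  note s4 = hvd_snd[OF s3]
  show "(cS1 x has_real_derivative (Pi_m p - L1 * cS1 x t - mu p * cS1 x t)) (at t within {0..})"
    using hvd_fst[OF d'] unfolding has_real_derivative_iff_has_vector_derivative e1[symmetric] fst_conv snd_conv .
  show "(cI1 x has_real_derivative (L1 * cS1 x t - mu p * cI1 x t)) (at t within {0..})"
    using hvd_fst[OF s1] unfolding has_real_derivative_iff_has_vector_derivative e2[symmetric] fst_conv snd_conv .
  show "(cS2 x has_real_derivative (Pi_f p - L2 * cS2 x t - mu p * cS2 x t)) (at t within {0..})"
    using hvd_fst[OF s2] unfolding has_real_derivative_iff_has_vector_derivative e3[symmetric] fst_conv snd_conv .
  show "(cI2 x has_real_derivative (L2 * cS2 x t - mu p * cI2 x t)) (at t within {0..})"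
    using hvd_fst[OF s3] unfolding has_real_derivative_iff_has_vector_derivative e4[symmetric] fst_conv snd_conv .
  show "(cS3 x has_real_derivative (Pi_h p - L3 * cS3 x t - mu p * cS3 x t)) (at t within {0..})"
    using hvd_fst[OF s4] unfolding has_real_derivative_iff_has_vector_derivative e5[symmetric] fst_conv snd_conv .
  show "(cI3 x has_real_derivative (L3 * cS3 x t - mu p * cI3 x t)) (at t within {0..})"
    using hvd_snd[OF s4] unfolding has_real_derivative_iff_has_vector_derivative e6[symmetric] fst_conv snd_conv .
qed

lemma lam_lb: fixes c1 c2 y1 y2 \<eta> :: real
  assumes "c1 \<ge> 0" "c2 \<ge> 0" "y1 \<ge> - \<eta>" "y2 \<ge> - \<eta>"
  shows "c1 * y1 + c2 * y2 \<ge> - (c1 + c2) * \<eta>"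
proof -
  have "c1 * y1 \<ge> c1 * (- \<eta>)" using assms by (intro mult_left_mono) auto
  moreover have "c2 * y2 \<ge> c2 * (- \<eta>)" using assms by (intro mult_left_mono) auto
  ultimately show ?thesis by (simp add: algebra_simps)
qed

lemma lam_abs: fixes c1 c2 y1 y2 B :: real
  assumes "c1 \<ge> 0" "c2 \<ge> 0" "\<bar>y1\<bar> \<le> B" "\<bar>y2\<bar> \<le> B"
  shows "\<bar>c1 * y1 + c2 * y2\<bar> \<le> (c1 + c2) * B"
proof -
  have "\<bar>c1 * y1\<bar> \<le> c1 * B" using assms by (simp add: abs_mult mult_left_mono)
  moreover have "\<bar>c2 * y2\<bar> \<le> c2 * B" using assms by (simp add: abs_mult mult_left_mono)
  ultimately show ?thesis by (simp add: algebra_simps)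
qed

lemma prod_lb: fixes l s C B \<eta> :: real
  assumes "l \<ge> - C * \<eta>" "\<bar>l\<bar> \<le> C * B" "s \<ge> - \<eta>" "s \<le> B" "\<eta> > 0" "C \<ge> 0" "B \<ge> 0"
  shows "l * s \<ge> - (C * B) * \<eta>"
proof (cases "l \<ge> 0")
  case True
  have "l * s \<ge> l * (- \<eta>)" using True assms by (intro mult_left_mono) auto
  moreover have "l * \<eta> \<le> (C * B) * \<eta>" using assms True by (intro mult_right_mono) auto
  ultimately show ?thesis by simp
next
  case False
  have "l * s \<ge> l * B" using False assms by (intro mult_left_mono_neg) auto
  moreover have "- l \<le> C * \<eta>" using assms by simp
  hence "(- l) * B \<le> (C * \<eta>) * B" using assms by (intro mult_right_mono) auto
  ultimately show ?thesis by (simp add: algebra_simps)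
qed

lemma caseI: fixes l s C CC B \<eta> m :: real
  assumes "l * s \<ge> - (C * B) * \<eta>" "C \<le> CC" "B \<ge> 0" "\<eta> > 0" "m \<ge> 0"
  shows "l * s + m * \<eta> \<ge> - (CC * B) * \<eta>"
proof -
  have "C * B * \<eta> \<le> CC * B * \<eta>" using assms by (intro mult_right_mono) auto
  hence "- (CC * B) * \<eta> \<le> - (C * B) * \<eta>" by simp
  moreover have "m * \<eta> \<ge> 0" using assms by simp
  ultimately show ?thesis using assms(1) by linarith
qed

lemma caseS: fixes l C CC B \<eta> m P :: real
  assumes "\<bar>l\<bar> \<le> C * B" "C \<le> CC" "B \<ge> 0" "\<eta> > 0" "m \<ge> 0" "P > 0"
  shows "P + l * \<eta> + m * \<eta> \<ge> - (CC * B) * \<eta>"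
proof -
  have "\<bar>l\<bar> \<le> CC * B" using assms by (meson mult_right_mono order_trans)
  hence "- (CC * B) \<le> l" by linarith
  hence "- (CC * B) * \<eta> \<le> l * \<eta>" using assms by (intro mult_right_mono) auto
  moreover have "m * \<eta> \<ge> 0" using assms by simp
  ultimately show ?thesis using assms by linarith
qed

lemma abs_comps: fixes a b c d e f :: real
  shows "\<bar>a\<bar> \<le> norm (a,b,c,d,e,f)" "\<bar>b\<bar> \<le> norm (a,b,c,d,e,f)" "\<bar>c\<bar> \<le> norm (a,b,c,d,e,f)"
    "\<bar>d\<bar> \<le> norm (a,b,c,d,e,f)" "\<bar>e\<bar> \<le> norm (a,b,c,d,e,f)" "\<bar>f\<bar> \<le> norm (a,b,c,d,e,f)"
proof -
  have n1: "norm (b,c,d,e,f) \<le> norm (a,b,c,d,e,f)" by (rule norm_snd_le)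
  have n2: "norm (c,d,e,f) \<le> norm (b,c,d,e,f)" by (rule norm_snd_le)
  have n3: "norm (d,e,f) \<le> norm (c,d,e,f)" by (rule norm_snd_le)
  have n4: "norm (e,f) \<le> norm (d,e,f)" by (rule norm_snd_le)
  have m1: "norm a \<le> norm (a,b,c,d,e,f)" by (rule norm_fst_le)
  have m2: "norm b \<le> norm (b,c,d,e,f)" by (rule norm_fst_le)
  have m3: "norm c \<le> norm (c,d,e,f)" by (rule norm_fst_le)
  have m4: "norm d \<le> norm (d,e,f)" by (rule norm_fst_le)
  have m5: "norm e \<le> norm (e,f)" by (rule norm_fst_le)
  have m6: "norm f \<le> norm (e,f)" by (rule norm_snd_le)
  show "\<bar>a\<bar> \<le> norm (a,b,c,d,e,f)" using m1 by simp
  show "\<bar>b\<bar> \<le> norm (a,b,c,d,e,f)" using m2 n1 by simp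
  show "\<bar>c\<bar> \<le> norm (a,b,c,d,e,f)" using m3 n1 n2 by simp
  show "\<bar>d\<bar> \<le> norm (a,b,c,d,e,f)" using m4 n1 n2 n3 by simp
  show "\<bar>e\<bar> \<le> norm (a,b,c,d,e,f)" using m5 n1 n2 n3 n4 by simp
  show "\<bar>f\<bar> \<le> norm (a,b,c,d,e,f)" using m6 n1 n2 n3 n4 by simp
qed

lemma sol_cont:
  assumes sol: "is_solution p x" and T: "T \<ge> 0"
  shows "continuous_on {0..T} x"
  unfolding continuous_on_eq_continuous_within
proof
  fix s assume s: "s \<in> {0..T}"
  hence "(x has_vector_derivative field p (x s)) (at s within {0..})"
    using sol unfolding is_solution_def by auto
  hence "continuous (at s within {0..}) x" by (rule has_vector_derivative_continuous)
  thus "continuous (at s within {0..T}) x" by (rule continuous_within_subset) auto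
qed

lemma sol_bound:
  assumes sol: "is_solution p x" and T: "T \<ge> 0"
  obtains B where "B > 0" "\<And>s. s \<in> {0..T} \<Longrightarrow> \<bar>cS1 x s\<bar> \<le> B \<and> \<bar>cI1 x s\<bar> \<le> B \<and> \<bar>cS2 x s\<bar> \<le> B
     \<and> \<bar>cI2 x s\<bar> \<le> B \<and> \<bar>cS3 x s\<bar> \<le> B \<and> \<bar>cI3 x s\<bar> \<le> B"
proof -
  have "compact (x ` {0..T})" by (rule compact_continuous_image[OF sol_cont[OF sol T]]) simp
  hence "bounded (x ` {0..T})" by (rule compact_imp_bounded)
  then obtain B where B: "B > 0" "\<And>z. z \<in> x ` {0..T} \<Longrightarrow> norm z \<le> B"
    unfolding bounded_pos by blast
  show ?thesis
  proof (rule that[OF B(1)])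
    fix s assume "s \<in> {0..T}"
    hence "norm (x s) \<le> B" using B(2) by blast
    hence "norm (cS1 x s, cI1 x s, cS2 x s, cI2 x s, cS3 x s, cI3 x s) \<le> B"
      by (subst (asm) x_split)
    thus "\<bar>cS1 x s\<bar> \<le> B \<and> \<bar>cI1 x s\<bar> \<le> B \<and> \<bar>cS2 x s\<bar> \<le> B
     \<and> \<bar>cI2 x s\<bar> \<le> B \<and> \<bar>cS3 x s\<bar> \<le> B \<and> \<bar>cI3 x s\<bar> \<le> B"
      using abs_comps[where a="cS1 x s" and b="cI1 x s" and c="cS2 x s" and d="cI2 x s" and e="cS3 x s" and f="cI3 x s"] by linarith
  qed
qed

lemma invariance:
  assumes adm: "admissible p" and sol: "is_solution p x" and x0: "x 0 \<in> Omega_star p" and t: "t \<ge> 0"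
  shows "0 \<le> cI1 x t \<and> 0 \<le> cI2 x t \<and> 0 \<le> cI3 x t \<and> 0 \<le> cS1 x t \<and> 0 \<le> cS2 x t \<and> 0 \<le> cS3 x t
    \<and> cS1 x t \<le> Nm p \<and> cS2 x t \<le> Nf p \<and> cS3 x t \<le> Nh p"
proof -
  note af = adm_facts[OF adm]
  obtain B where B0: "B > 0" and Bb: "\<And>s. s \<in> {0..t} \<Longrightarrow> \<bar>cS1 x s\<bar> \<le> B \<and> \<bar>cI1 x s\<bar> \<le> B \<and> \<bar>cS2 x s\<bar> \<le> B
     \<and> \<bar>cI2 x s\<bar> \<le> B \<and> \<bar>cS3 x s\<bar> \<le> B \<and> \<bar>cI3 x s\<bar> \<le> B"
    using sol_bound[OF sol t] by blast
  define CC where "CC = c11 p + c12 p + c21 p + c23 p + c32 p"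
  define L1 where "L1 = (\<lambda>s. c11 p * cI1 x s + c12 p * cI2 x s)"
  define L2 where "L2 = (\<lambda>s. c21 p * cI1 x s + c23 p * cI3 x s)"
  define L3 where "L3 = (\<lambda>s. c32 p * cI2 x s)"
  define g where "g = (\<lambda>k::nat. if k = 0 then cI1 x else if k = 1 then cI2 x else if k = 2 then cI3 x
     else if k = 3 then cS1 x else if k = 4 then cS2 x else if k = 5 then cS3 x
     else if k = 6 then (\<lambda>s. Nm p - cS1 x s) else if k = 7 then (\<lambda>s. Nf p - cS2 x s) else (\<lambda>s. Nh p - cS3 x s))"
  define g' where "g' = (\<lambda>(k::nat) s. if k = 0 then L1 s * cS1 x s - mu p * cI1 x s
     else if k = 1 then L2 s * cS2 x s - mu p * cI2 x s
     else if k = 2 then L3 s * cS3 x s - mu p * cI3 x s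
     else if k = 3 then Pi_m p - L1 s * cS1 x s - mu p * cS1 x s
     else if k = 4 then Pi_f p - L2 s * cS2 x s - mu p * cS2 x s
     else if k = 5 then Pi_h p - L3 s * cS3 x s - mu p * cS3 x s
     else if k = 6 then - (Pi_m p - L1 s * cS1 x s - mu p * cS1 x s)
     else if k = 7 then - (Pi_f p - L2 s * cS2 x s - mu p * cS2 x s)
     else - (Pi_h p - L3 s * cS3 x s - mu p * cS3 x s))"
  define K where "K = {0::nat, 1, 2, 3, 4, 5, 6, 7, 8}"
  have gs: "g 0 = cI1 x" "g 1 = cI2 x" "g 2 = cI3 x" "g 3 = cS1 x" "g 4 = cS2 x" "g 5 = cS3 x"
    "g 6 = (\<lambda>s. Nm p - cS1 x s)" "g 7 = (\<lambda>s. Nf p - cS2 x s)" "g 8 = (\<lambda>s. Nh p - cS3 x s)" "g (Suc 0) = cI2 x"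
    unfolding g_def by simp_all
  have g's: "g' 0 s = L1 s * cS1 x s - mu p * cI1 x s"
     "g' 1 s = L2 s * cS2 x s - mu p * cI2 x s"
     "g' 2 s = L3 s * cS3 x s - mu p * cI3 x s"
     "g' 3 s = Pi_m p - L1 s * cS1 x s - mu p * cS1 x s"
     "g' 4 s = Pi_f p - L2 s * cS2 x s - mu p * cS2 x s"
     "g' 5 s = Pi_h p - L3 s * cS3 x s - mu p * cS3 x s"
     "g' 6 s = - (Pi_m p - L1 s * cS1 x s - mu p * cS1 x s)"
     "g' 7 s = - (Pi_f p - L2 s * cS2 x s - mu p * cS2 x s)"
     "g' 8 s = - (Pi_h p - L3 s * cS3 x s - mu p * cS3 x s)"
     "g' (Suc 0) s = L2 s * cS2 x s - mu p * cI2 x s" for s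
    unfolding g'_def by simp_all
  have Kc: "k = 0 \<or> k = 1 \<or> k = 2 \<or> k = 3 \<or> k = 4 \<or> k = 5 \<or> k = 6 \<or> k = 7 \<or> k = 8" if "k \<in> K" for k
    using that unfolding K_def by blast
  have der: "(g k has_real_derivative g' k s) (at s within {0..t})" if k: "k \<in> K" and s: "s \<in> {0..t}" for k s
  proof -
    have s0: "s \<ge> 0" using s by simp
    have sub: "{0..t} \<subseteq> {0..}" by auto
    note cd = comp_derivs[OF adm sol s0]
    have d1: "(cS1 x has_real_derivative (Pi_m p - L1 s * cS1 x s - mu p * cS1 x s)) (at s within {0..t})"
      using DERIV_subset[OF cd(1) sub] by (simp add: L1_def)
    have d2: "(cI1 x has_real_derivative (L1 s * cS1 x s - mu p * cI1 x s)) (at s within {0..t})"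
      using DERIV_subset[OF cd(2) sub] by (simp add: L1_def)
    have d3: "(cS2 x has_real_derivative (Pi_f p - L2 s * cS2 x s - mu p * cS2 x s)) (at s within {0..t})"
      using DERIV_subset[OF cd(3) sub] by (simp add: L2_def)
    have d4: "(cI2 x has_real_derivative (L2 s * cS2 x s - mu p * cI2 x s)) (at s within {0..t})"
      using DERIV_subset[OF cd(4) sub] by (simp add: L2_def)
    have d5: "(cS3 x has_real_derivative (Pi_h p - L3 s * cS3 x s - mu p * cS3 x s)) (at s within {0..t})"
      using DERIV_subset[OF cd(5) sub] by (simp add: L3_def)
    have d6: "(cI3 x has_real_derivative (L3 s * cS3 x s - mu p * cI3 x s)) (at s within {0..t})"
      using DERIV_subset[OF cd(6) sub] by (simp add: L3_def)
    have d7: "((\<lambda>s. Nm p - cS1 x s) has_real_derivative - (Pi_m p - L1 s * cS1 x s - mu p * cS1 x s)) (at s within {0..t})"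
      using DERIV_diff[OF DERIV_const d1] by simp
    have d8: "((\<lambda>s. Nf p - cS2 x s) has_real_derivative - (Pi_f p - L2 s * cS2 x s - mu p * cS2 x s)) (at s within {0..t})"
      using DERIV_diff[OF DERIV_const d3] by simp
    have d9: "((\<lambda>s. Nh p - cS3 x s) has_real_derivative - (Pi_h p - L3 s * cS3 x s - mu p * cS3 x s)) (at s within {0..t})"
      using DERIV_diff[OF DERIV_const d5] by simp
    from Kc[OF k] show ?thesis
      by (elim disjE) (simp_all only: gs g's d1 d2 d3 d4 d5 d6 d7 d8 d9)
  qed
  have init: "g k 0 \<ge> 0" if k: "k \<in> K" for k
  proof -
    have "(cS1 x 0, cI1 x 0, cS2 x 0, cI2 x 0, cS3 x 0, cI3 x 0) \<in> Omega_star p"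
      using x0 by (subst (asm) x_split)
    hence o: "0 \<le> cS1 x 0" "0 \<le> cI1 x 0" "0 \<le> cS2 x 0" "0 \<le> cI2 x 0" "0 \<le> cS3 x 0" "0 \<le> cI3 x 0"
      "cS1 x 0 \<le> Nm p" "cS2 x 0 \<le> Nf p" "cS3 x 0 \<le> Nh p"
      unfolding Omega_star_def by simp_all
    from Kc[OF k] show ?thesis
      by (elim disjE; simp only: gs; simp add: o)
  qed
  have CCs: "c11 p + c12 p \<le> CC" "c21 p + c23 p \<le> CC" "c32 p \<le> CC" "c11 p + c12 p \<ge> 0"
     "c21 p + c23 p \<ge> 0"
    using af unfolding CC_def by linarith+
  have Mb: "g' k s \<ge> - (CC * B) * \<eta>"
    if k: "k \<in> K" and s: "s \<in> {0..t}" and eta: "\<eta> > 0" and all: "\<forall>i\<in>K. g i s \<ge> - \<eta>"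
      and gk: "g k s = - \<eta>" for k s \<eta>
  proof -
    have bd: "\<bar>cS1 x s\<bar> \<le> B" "\<bar>cI1 x s\<bar> \<le> B" "\<bar>cS2 x s\<bar> \<le> B" "\<bar>cI2 x s\<bar> \<le> B"
      "\<bar>cS3 x s\<bar> \<le> B" "\<bar>cI3 x s\<bar> \<le> B" using Bb[OF s] by simp_all
    have bd': "cS1 x s \<le> B" "cS2 x s \<le> B" "cS3 x s \<le> B" using bd by simp_all
    have h: "cI1 x s \<ge> - \<eta>" "cI2 x s \<ge> - \<eta>" "cI3 x s \<ge> - \<eta>"
      "cS1 x s \<ge> - \<eta>" "cS2 x s \<ge> - \<eta>" "cS3 x s \<ge> - \<eta>"
      "Nm p - cS1 x s \<ge> - \<eta>" "Nf p - cS2 x s \<ge> - \<eta>" "Nh p - cS3 x s \<ge> - \<eta>"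
      using all unfolding K_def by (simp_all add: gs)
    have L1lb: "L1 s \<ge> - (c11 p + c12 p) * \<eta>" unfolding L1_def using af h by (intro lam_lb) auto
    have L1ab: "\<bar>L1 s\<bar> \<le> (c11 p + c12 p) * B" unfolding L1_def using af bd by (intro lam_abs) auto
    have L2lb: "L2 s \<ge> - (c21 p + c23 p) * \<eta>" unfolding L2_def using af h by (intro lam_lb) auto
    have L2ab: "\<bar>L2 s\<bar> \<le> (c21 p + c23 p) * B" unfolding L2_def using af bd by (intro lam_abs) auto
    have L3lb: "L3 s \<ge> - (c32 p) * \<eta>"
    proof -
      have "c32 p * cI2 x s \<ge> c32 p * (- \<eta>)" using af h by (intro mult_left_mono) auto
      thus ?thesis unfolding L3_def by simp
    qed
    have L3ab: "\<bar>L3 s\<bar> \<le> (c32 p) * B" unfolding L3_def using af bd by (simp add: abs_mult mult_left_mono)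
    have P1: "L1 s * cS1 x s \<ge> - ((c11 p + c12 p) * B) * \<eta>"
      by (rule prod_lb[OF L1lb L1ab h(4) bd'(1) eta CCs(4)]) (use B0 in simp)
    have P2: "L2 s * cS2 x s \<ge> - ((c21 p + c23 p) * B) * \<eta>"
      by (rule prod_lb[OF L2lb L2ab h(5) bd'(2) eta CCs(5)]) (use B0 af in simp_all)
    have P3: "L3 s * cS3 x s \<ge> - ((c32 p) * B) * \<eta>"
      by (rule prod_lb[OF L3lb L3ab h(6) bd'(3) eta]) (use B0 af in simp_all)
    have mu0: "mu p \<ge> 0" using af by simp
    have B0': "B \<ge> 0" using B0 by simp
    from Kc[OF k] show ?thesis
    proof (elim disjE)
      assume "k = 0"
      hence "cI1 x s = - \<eta>" using gk gs by simp
      hence "g' k s = L1 s * cS1 x s + mu p * \<eta>" using \<open>k = 0\<close> g's by simp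
      thus ?thesis using caseI[OF P1 CCs(1) B0' eta mu0] by simp
    next
      assume "k = 1"
      hence "cI2 x s = - \<eta>" using gk gs by simp
      hence "g' k s = L2 s * cS2 x s + mu p * \<eta>" using \<open>k = 1\<close> g's by simp
      thus ?thesis using caseI[OF P2 CCs(2) B0' eta mu0] by simp
    next
      assume "k = 2"
      hence "cI3 x s = - \<eta>" using gk gs by simp
      hence "g' k s = L3 s * cS3 x s + mu p * \<eta>" using \<open>k = 2\<close> g's by simp
      thus ?thesis using caseI[OF P3 CCs(3) B0' eta mu0] by simp
    next
      assume "k = 3"
      hence "cS1 x s = - \<eta>" using gk gs by simp
      hence "g' k s = Pi_m p + L1 s * \<eta> + mu p * \<eta>" using \<open>k = 3\<close> g's by simp
      thus ?thesis using caseS[OF L1ab CCs(1) B0' eta mu0, of "Pi_m p"] af by simp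
    next
      assume "k = 4"
      hence "cS2 x s = - \<eta>" using gk gs by simp
      hence "g' k s = Pi_f p + L2 s * \<eta> + mu p * \<eta>" using \<open>k = 4\<close> g's by simp
      thus ?thesis using caseS[OF L2ab CCs(2) B0' eta mu0, of "Pi_f p"] af by simp
    next
      assume "k = 5"
      hence "cS3 x s = - \<eta>" using gk gs by simp
      hence "g' k s = Pi_h p + L3 s * \<eta> + mu p * \<eta>" using \<open>k = 5\<close> g's by simp
      thus ?thesis using caseS[OF L3ab CCs(3) B0' eta mu0, of "Pi_h p"] af by simp
    next
      assume "k = 6"
      hence e: "cS1 x s = Nm p + \<eta>" using gk gs by simp
      have "g' k s = L1 s * cS1 x s + (mu p * Nm p - Pi_m p) + mu p * \<eta>"
        using \<open>k = 6\<close> g's e by (simp add: algebra_simps)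
      hence "g' k s = L1 s * cS1 x s + mu p * \<eta>" using af by simp
      thus ?thesis using caseI[OF P1 CCs(1) B0' eta mu0] by simp
    next
      assume "k = 7"
      hence e: "cS2 x s = Nf p + \<eta>" using gk gs by simp
      have "g' k s = L2 s * cS2 x s + (mu p * Nf p - Pi_f p) + mu p * \<eta>"
        using \<open>k = 7\<close> g's e by (simp add: algebra_simps)
      hence "g' k s = L2 s * cS2 x s + mu p * \<eta>" using af by simp
      thus ?thesis using caseI[OF P2 CCs(2) B0' eta mu0] by simp
    next
      assume "k = 8"
      hence e: "cS3 x s = Nh p + \<eta>" using gk gs by simp
      have "g' k s = L3 s * cS3 x s + (mu p * Nh p - Pi_h p) + mu p * \<eta>"
        using \<open>k = 8\<close> g's e by (simp add: algebra_simps)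
      hence "g' k s = L3 s * cS3 x s + mu p * \<eta>" using af by simp
      thus ?thesis using caseI[OF P3 CCs(3) B0' eta mu0] by simp
    qed
  qed
  have fin: "finite K" unfolding K_def by simp
  have tt: "t \<in> {0..t}" using t by simp
  have res: "g k t \<ge> 0" if "k \<in> K" for k
    by (rule first_exit[of K t g g' "CC * B", OF fin der init Mb that tt]) auto
  have "g 0 t \<ge> 0" "g 1 t \<ge> 0" "g 2 t \<ge> 0" "g 3 t \<ge> 0" "g 4 t \<ge> 0" "g 5 t \<ge> 0"
    "g 6 t \<ge> 0" "g 7 t \<ge> 0" "g 8 t \<ge> 0" by (rule res, simp add: K_def)+
  thus ?thesis unfolding gs by simp
qed

lemma exp_decay_lim: "k > 0 \<Longrightarrow> ((\<lambda>t::real. exp (- k * t)) \<longlongrightarrow> 0) at_top"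
proof -
  assume k: "k > 0"
  have "LIM t at_top. k * t :> at_top"
    by (rule filterlim_tendsto_pos_mult_at_top[OF tendsto_const k filterlim_ident])
  hence "LIM t at_top. - (k * t) :> at_bot" by (simp add: filterlim_uminus_at_top)
  hence "LIM t at_top. - k * t :> at_bot" by simp
  from filterlim_compose[OF exp_at_bot this] show ?thesis .
qed

definition sa :: "hiv_params \<Rightarrow> real" where "sa p = c11 p * Nm p / mu p"
definition sb :: "hiv_params \<Rightarrow> real" where "sb p = c12 p * Nm p / mu p"
definition sc :: "hiv_params \<Rightarrow> real" where "sc p = c21 p * Nf p / mu p"
definition sd :: "hiv_params \<Rightarrow> real" where "sd p = c23 p * Nf p / mu p"
definition se :: "hiv_params \<Rightarrow> real" where "se p = c32 p * Nh p / mu p"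

lemma s_nonneg:
  assumes "admissible p"
  shows "sa p \<ge> 0" "sb p \<ge> 0" "sc p \<ge> 0" "sd p \<ge> 0" "se p \<ge> 0"
  using adm_facts[OF assms] unfolding sa_def sb_def sc_def sd_def se_def by simp_all

lemma Rc_cond:
  assumes adm: "admissible p" and rc: "Rc_hat p < 1"
  shows "sa p < 1 \<and> (1 - sa p) * (1 - sd p * se p) - sb p * sc p > 0"
proof -
  note af = adm_facts[OF adm]
  have eqs: "(1 / mu p) * (a_m p * (1 - eps_m p) * eta p * bMM p * Nm p / Nm p) = sa p"
    "(1 / mu p) * (a_m p * (1 - eps_m p) * (1 - eta p) * bFM p * Nm p / Nf p) = sb p"
    "(1 / mu p) * (a_f p * (1 - eps_f p) * alpha p * bMF p * Nf p / Nm p) = sc p"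
    "(1 / mu p) * (a_f p * (1 - eps_f p) * (1 - alpha p) * bMF p * Nf p / Nh p) = sd p"
    "(1 / mu p) * (a_h p * (1 - eps_h p) * bFM p * Nh p / Nf p) = se p"
    using af unfolding sa_def sb_def sc_def sd_def se_def c11_def c12_def c21_def c23_def c32_def
    by (simp_all add: field_simps)
  have "map_mat complex_of_real (Fmat p * Vhat_inv p) =
    map_mat complex_of_real ((1 / mu p) \<cdot>\<^sub>m Fmat p)" using Fmat_Vinv af by simp
  also have "\<dots> = mat_of_rows_list 3 [[complex_of_real (sa p), complex_of_real (sb p), 0],
      [complex_of_real (sc p), 0, complex_of_real (sd p)], [0, complex_of_real (se p), 0]]"
    unfolding Fmat_def map_smult_rows3 eqs by simp
  finally have M: "map_mat complex_of_real (Fmat p * Vhat_inv p) = mat_of_rows_list 3 [[complex_of_real (sa p), complex_of_real (sb p), 0],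
      [complex_of_real (sc p), 0, complex_of_real (sd p)], [0, complex_of_real (se p), 0]]" .
  show ?thesis
    by (rule spec_cond[OF M s_nonneg[OF adm]]) (use rc in \<open>simp add: Rc_hat_def\<close>)
qed

lemma v_exists:
  fixes a b c d e :: real
  assumes nn: "a \<ge> 0" "b \<ge> 0" "c \<ge> 0" "d \<ge> 0" "e \<ge> 0" and a1: "a < 1"
    and D: "(1 - a) * (1 - d * e) - b * c > 0"
  shows "\<exists>v1 v2 v3. v1 > 0 \<and> v2 > 0 \<and> v3 > 0 \<and> v1 * (1 - a) - v2 * c > 0
    \<and> v2 - v1 * b - v3 * e > 0 \<and> v3 - v2 * d > 0"
proof -
  define DD where "DD = (1 - a) * (1 - d * e) - b * c"
  define t0 where "t0 = DD / (2 * (b + 1))"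
  define ep where "ep = DD / (2 * (e + 1))"
  have DD: "DD > 0" using D by (simp add: DD_def)
  have t0: "t0 > 0" using DD nn by (simp add: t0_def)
  have ep: "ep > 0" using DD nn by (simp add: ep_def)
  define v1 where "v1 = (c + t0) / (1 - a)"
  have v1: "v1 > 0" using t0 nn a1 by (simp add: v1_def)
  have c1: "v1 * (1 - a) - 1 * c = t0" using a1 by (simp add: v1_def)
  have tb: "t0 * b < DD / 2"
  proof -
    have "t0 * b = DD * b / (2 * (b + 1))" by (simp add: t0_def)
    also have "\<dots> < DD / 2" using DD nn by (simp add: field_simps)
    finally show ?thesis .
  qed
  have ee: "ep * e * (1 - a) < DD / 2"
  proof -
    have "ep * e * (1 - a) \<le> ep * e" using ep nn a1 by (simp add: mult_left_le)
    also have "ep * e = DD * e / (2 * (e + 1))" by (simp add: ep_def)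
    also have "\<dots> < DD / 2" using DD nn by (simp add: field_simps)
    finally show ?thesis .
  qed
  have "(1 - v1 * b - (d + ep) * e) * (1 - a) = (1 - a) - (c + t0) * b - (d + ep) * e * (1 - a)"
    using a1 by (simp add: v1_def field_simps)
  also have "\<dots> = DD - t0 * b - ep * e * (1 - a)" by (simp add: DD_def algebra_simps)
  also have "\<dots> > 0" using tb ee by linarith
  finally have "(1 - v1 * b - (d + ep) * e) * (1 - a) > 0" .
  hence c2: "1 - v1 * b - (d + ep) * e > 0" using a1 by (simp add: zero_less_mult_iff)
  show ?thesis
    by (rule exI[of _ v1], rule exI[of _ 1], rule exI[of _ "d + ep"])
       (use v1 t0 c1 c2 ep nn in simp)
qed

lemma lyap_ineq:
  fixes v1 v2 v3 mu m I1 I2 I3 S1 S2 S3 N1 N2 N3 L1 L2 L3 a b c d e :: real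
  assumes I: "I1 \<ge> 0" "I2 \<ge> 0" "I3 \<ge> 0" and S: "S1 \<le> N1" "S2 \<le> N2" "S3 \<le> N3"
    and L: "L1 \<ge> 0" "L2 \<ge> 0" "L3 \<ge> 0"
    and LN: "L1 * N1 = mu * (a * I1 + b * I2)" "L2 * N2 = mu * (c * I1 + d * I3)" "L3 * N3 = mu * (e * I2)"
    and v: "v1 > 0" "v2 > 0" "v3 > 0" and mu: "mu > 0" and m: "m > 0"
    and sl: "v1 * (1 - a) - v2 * c \<ge> m" "v2 - v1 * b - v3 * e \<ge> m" "v3 - v2 * d \<ge> m"
  shows "v1 * (L1 * S1 - mu * I1) + v2 * (L2 * S2 - mu * I2) + v3 * (L3 * S3 - mu * I3)
     \<le> - (mu * m / (v1 + v2 + v3)) * (v1 * I1 + v2 * I2 + v3 * I3)"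
proof -
  have "L1 * S1 \<le> L1 * N1" using L S by (intro mult_left_mono) auto
  hence A1: "v1 * (L1 * S1 - mu * I1) \<le> v1 * (mu * (a * I1 + b * I2) - mu * I1)"
    using v LN by (intro mult_left_mono) auto
  have "L2 * S2 \<le> L2 * N2" using L S by (intro mult_left_mono) auto
  hence A2: "v2 * (L2 * S2 - mu * I2) \<le> v2 * (mu * (c * I1 + d * I3) - mu * I2)"
    using v LN by (intro mult_left_mono) auto
  have "L3 * S3 \<le> L3 * N3" using L S by (intro mult_left_mono) auto
  hence A3: "v3 * (L3 * S3 - mu * I3) \<le> v3 * (mu * (e * I2) - mu * I3)"
    using v LN by (intro mult_left_mono) auto
  have id: "v1 * (mu * (a * I1 + b * I2) - mu * I1) + v2 * (mu * (c * I1 + d * I3) - mu * I2)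
      + v3 * (mu * (e * I2) - mu * I3)
    = - mu * (I1 * (v1 * (1 - a) - v2 * c) + I2 * (v2 - v1 * b - v3 * e) + I3 * (v3 - v2 * d))"
    by (simp add: algebra_simps)
  have "I1 * m \<le> I1 * (v1 * (1 - a) - v2 * c)" using I sl by (intro mult_left_mono) auto
  moreover have "I2 * m \<le> I2 * (v2 - v1 * b - v3 * e)" using I sl by (intro mult_left_mono) auto
  moreover have "I3 * m \<le> I3 * (v3 - v2 * d)" using I sl by (intro mult_left_mono) auto
  ultimately have B: "m * (I1 + I2 + I3) \<le> I1 * (v1 * (1 - a) - v2 * c) + I2 * (v2 - v1 * b - v3 * e) + I3 * (v3 - v2 * d)"
    by (simp add: algebra_simps)
  define V where "V = v1 + v2 + v3"
  have V: "V > 0" using v by (simp add: V_def)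
  have "v1 * I1 + v2 * I2 + v3 * I3 \<le> V * (I1 + I2 + I3)"
  proof -
    have "v1 * I1 \<le> V * I1" using I v by (intro mult_right_mono) (auto simp: V_def)
    moreover have "v2 * I2 \<le> V * I2" using I v by (intro mult_right_mono) (auto simp: V_def)
    moreover have "v3 * I3 \<le> V * I3" using I v by (intro mult_right_mono) (auto simp: V_def)
    ultimately show ?thesis by (simp add: algebra_simps)
  qed
  hence "(mu * m / V) * (v1 * I1 + v2 * I2 + v3 * I3) \<le> (mu * m / V) * (V * (I1 + I2 + I3))"
    using mu m V by (intro mult_left_mono) auto
  also have "\<dots> = mu * (m * (I1 + I2 + I3))" using V by simp
  also have "\<dots> \<le> mu * (I1 * (v1 * (1 - a) - v2 * c) + I2 * (v2 - v1 * b - v3 * e) + I3 * (v3 - v2 * d))"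
    using B mu by (intro mult_left_mono) auto
  finally have C: "(mu * m / V) * (v1 * I1 + v2 * I2 + v3 * I3) \<le> mu * (I1 * (v1 * (1 - a) - v2 * c) + I2 * (v2 - v1 * b - v3 * e) + I3 * (v3 - v2 * d))" .
  show ?thesis using A1 A2 A3 id C unfolding V_def by linarith
qed

lemma N_decay1:
  fixes f :: "real \<Rightarrow> real" and \<mu> Pi N :: real
  assumes der: "\<And>s. s \<ge> 0 \<Longrightarrow> (f has_real_derivative - \<mu> * f s) (at s within {0..})" and t: "t \<ge> 0"
  shows "\<bar>f t\<bar> \<le> \<bar>f 0\<bar> * exp (- \<mu> * t)"
proof -
  have u: "f t \<le> f 0 * exp (- \<mu> * t)" 
  proof -
    have i: "- \<mu> * f s \<le> - \<mu> * f s" if "0 \<le> s" for s by simp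
    show ?thesis using decay[OF der i t] by simp
  qed
  have der': "((\<lambda>s. - f s) has_real_derivative - \<mu> * (- f s)) (at s within {0..})" if "s \<ge> 0" for s
    using DERIV_minus[OF der[OF that]] by simp
  have l: "- f t \<le> (- f 0) * exp (- \<mu> * t)" 
  proof -
    have i: "- \<mu> * (- f s) \<le> - \<mu> * (- f s)" if "0 \<le> s" for s by simp
    show ?thesis using decay[OF der' i t] by simp
  qed
  from u l have "f t = f 0 * exp (- \<mu> * t)" by simp
  thus ?thesis by (simp add: abs_mult)
qed

lemma N_decay:
  assumes adm: "admissible p" and sol: "is_solution p x" and t: "t \<ge> 0"
  shows "\<bar>cS1 x t + cI1 x t - Nm p\<bar> \<le> \<bar>cS1 x 0 + cI1 x 0 - Nm p\<bar> * exp (- mu p * t)"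
    "\<bar>cS2 x t + cI2 x t - Nf p\<bar> \<le> \<bar>cS2 x 0 + cI2 x 0 - Nf p\<bar> * exp (- mu p * t)"
    "\<bar>cS3 x t + cI3 x t - Nh p\<bar> \<le> \<bar>cS3 x 0 + cI3 x 0 - Nh p\<bar> * exp (- mu p * t)"
proof -
  note af = adm_facts[OF adm]
  show "\<bar>cS1 x t + cI1 x t - Nm p\<bar> \<le> \<bar>cS1 x 0 + cI1 x 0 - Nm p\<bar> * exp (- mu p * t)"
  proof (rule N_decay1[OF _ t])
    fix s :: real assume s: "s \<ge> 0"
    note cd = comp_derivs[OF adm sol s]
    show "((\<lambda>t. cS1 x t + cI1 x t - Nm p) has_real_derivative - mu p * (cS1 x s + cI1 x s - Nm p)) (at s within {0..})"
      by (rule DERIV_cong[OF DERIV_diff[OF DERIV_add[OF cd(1) cd(2)] DERIV_const]]) (use af in \<open>simp add: algebra_simps\<close>)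
  qed
  show "\<bar>cS2 x t + cI2 x t - Nf p\<bar> \<le> \<bar>cS2 x 0 + cI2 x 0 - Nf p\<bar> * exp (- mu p * t)"
  proof (rule N_decay1[OF _ t])
    fix s :: real assume s: "s \<ge> 0"
    note cd = comp_derivs[OF adm sol s]
    show "((\<lambda>t. cS2 x t + cI2 x t - Nf p) has_real_derivative - mu p * (cS2 x s + cI2 x s - Nf p)) (at s within {0..})"
      by (rule DERIV_cong[OF DERIV_diff[OF DERIV_add[OF cd(3) cd(4)] DERIV_const]]) (use af in \<open>simp add: algebra_simps\<close>)
  qed
  show "\<bar>cS3 x t + cI3 x t - Nh p\<bar> \<le> \<bar>cS3 x 0 + cI3 x 0 - Nh p\<bar> * exp (- mu p * t)"
  proof (rule N_decay1[OF _ t])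
    fix s :: real assume s: "s \<ge> 0"
    note cd = comp_derivs[OF adm sol s]
    show "((\<lambda>t. cS3 x t + cI3 x t - Nh p) has_real_derivative - mu p * (cS3 x s + cI3 x s - Nh p)) (at s within {0..})"
      by (rule DERIV_cong[OF DERIV_diff[OF DERIV_add[OF cd(5) cd(6)] DERIV_const]]) (use af in \<open>simp add: algebra_simps\<close>)
  qed
qed

lemma I_decay:
  assumes adm: "admissible p" and sol: "is_solution p x" and x0: "x 0 \<in> Omega_star p" and t: "t \<ge> 0"
    and v: "v1 > 0" "v2 > 0" "v3 > 0" and m: "m > 0"
    and sl: "v1 * (1 - sa p) - v2 * sc p \<ge> m" "v2 - v1 * sb p - v3 * se p \<ge> m" "v3 - v2 * sd p \<ge> m"
  shows "v1 * cI1 x t + v2 * cI2 x t + v3 * cI3 x t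
    \<le> (v1 * cI1 x 0 + v2 * cI2 x 0 + v3 * cI3 x 0) * exp (- (mu p * m / (v1 + v2 + v3)) * t)"
proof (rule decay[where f = "\<lambda>s. v1 * cI1 x s + v2 * cI2 x s + v3 * cI3 x s"])
  note af = adm_facts[OF adm]
  fix s :: real assume s: "s \<ge> 0"
  note cd = comp_derivs[OF adm sol s]
  show "((\<lambda>s. v1 * cI1 x s + v2 * cI2 x s + v3 * cI3 x s) has_real_derivative
     v1 * ((c11 p * cI1 x s + c12 p * cI2 x s) * cS1 x s - mu p * cI1 x s)
     + v2 * ((c21 p * cI1 x s + c23 p * cI3 x s) * cS2 x s - mu p * cI2 x s)
     + v3 * ((c32 p * cI2 x s) * cS3 x s - mu p * cI3 x s)) (at s within {0..})"
    by (intro DERIV_add DERIV_cmult cd(2) cd(4) cd(6))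
  have inv: "0 \<le> cI1 x s \<and> 0 \<le> cI2 x s \<and> 0 \<le> cI3 x s \<and> 0 \<le> cS1 x s \<and> 0 \<le> cS2 x s \<and> 0 \<le> cS3 x s
    \<and> cS1 x s \<le> Nm p \<and> cS2 x s \<le> Nf p \<and> cS3 x s \<le> Nh p" by (rule invariance[OF adm sol x0 s])
  have LN: "(c11 p * cI1 x s + c12 p * cI2 x s) * Nm p = mu p * (sa p * cI1 x s + sb p * cI2 x s)"
    "(c21 p * cI1 x s + c23 p * cI3 x s) * Nf p = mu p * (sc p * cI1 x s + sd p * cI3 x s)"
    "(c32 p * cI2 x s) * Nh p = mu p * (se p * cI2 x s)"
    using af unfolding sa_def sb_def sc_def sd_def se_def by (simp_all add: field_simps)
  show "v1 * ((c11 p * cI1 x s + c12 p * cI2 x s) * cS1 x s - mu p * cI1 x s)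
     + v2 * ((c21 p * cI1 x s + c23 p * cI3 x s) * cS2 x s - mu p * cI2 x s)
     + v3 * ((c32 p * cI2 x s) * cS3 x s - mu p * cI3 x s)
     \<le> - (mu p * m / (v1 + v2 + v3)) * (v1 * cI1 x s + v2 * cI2 x s + v3 * cI3 x s)"
    by (rule lyap_ineq[OF _ _ _ _ _ _ _ _ _ LN v _ m sl]) (use inv af in \<open>simp_all add: add_nonneg_nonneg\<close>)
qed (use t in simp)

lemma dist6:
  fixes a1 a2 a3 a4 a5 a6 b1 b2 b3 b4 b5 b6 :: real
  shows "dist (a1, a2, a3, a4, a5, a6) (b1, b2, b3, b4, b5, b6)
    \<le> \<bar>a1 - b1\<bar> + \<bar>a2 - b2\<bar> + \<bar>a3 - b3\<bar> + \<bar>a4 - b4\<bar> + \<bar>a5 - b5\<bar> + \<bar>a6 - b6\<bar>"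
proof -
  have "dist (a1, a2, a3, a4, a5, a6) (b1, b2, b3, b4, b5, b6)
     = norm (a1 - b1, a2 - b2, a3 - b3, a4 - b4, a5 - b5, a6 - b6)" by (simp add: dist_norm)
  also have "\<dots> \<le> norm (a1 - b1) + norm (a2 - b2, a3 - b3, a4 - b4, a5 - b5, a6 - b6)" by (rule norm_Pair_le)
  also have "norm (a2 - b2, a3 - b3, a4 - b4, a5 - b5, a6 - b6) \<le> norm (a2 - b2) + norm (a3 - b3, a4 - b4, a5 - b5, a6 - b6)" by (rule norm_Pair_le)
  also have "norm (a3 - b3, a4 - b4, a5 - b5, a6 - b6) \<le> norm (a3 - b3) + norm (a4 - b4, a5 - b5, a6 - b6)" by (rule norm_Pair_le)
  also have "norm (a4 - b4, a5 - b5, a6 - b6) \<le> norm (a4 - b4) + norm (a5 - b5, a6 - b6)" by (rule norm_Pair_le)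
  also have "norm (a5 - b5, a6 - b6) \<le> norm (a5 - b5) + norm (a6 - b6)" by (rule norm_Pair_le)
  finally show ?thesis by (simp add: add.assoc)
qed

lemma main_bound:
  assumes adm: "admissible p" and rc: "Rc_hat p < 1"
  obtains W \<kappa> where "W > 0" "\<kappa> > 0"
    "\<And>x t. is_solution p x \<Longrightarrow> x 0 \<in> Omega_star p \<Longrightarrow> t \<ge> 0 \<Longrightarrow>
       dist (x t) (dfe p) \<le> W * dist (x 0) (dfe p) * exp (- \<kappa> * t)"
proof -
  note af = adm_facts[OF adm]
  note sn = s_nonneg[OF adm]
  from Rc_cond[OF adm rc] have a1: "sa p < 1" and D: "(1 - sa p) * (1 - sd p * se p) - sb p * sc p > 0"
    by auto
  from v_exists[OF sn a1 D] obtain v1 v2 v3 where v: "v1 > 0" "v2 > 0" "v3 > 0"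
    and s1: "v1 * (1 - sa p) - v2 * sc p > 0" and s2: "v2 - v1 * sb p - v3 * se p > 0"
    and s3: "v3 - v2 * sd p > 0" by blast
  define m where "m = min (min (v1 * (1 - sa p) - v2 * sc p) (v2 - v1 * sb p - v3 * se p)) (v3 - v2 * sd p)"
  have m: "m > 0" using s1 s2 s3 by (simp add: m_def)
  have sl: "v1 * (1 - sa p) - v2 * sc p \<ge> m" "v2 - v1 * sb p - v3 * se p \<ge> m" "v3 - v2 * sd p \<ge> m"
    by (simp_all add: m_def)
  define V where "V = v1 + v2 + v3"
  have V: "V > 0" using v by (simp add: V_def)
  define \<kappa>1 where "\<kappa>1 = mu p * m / V"
  have k1: "\<kappa>1 > 0" using af m V by (simp add: \<kappa>1_def)
  define \<kappa> where "\<kappa> = min \<kappa>1 (mu p)"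
  have k: "\<kappa> > 0" using k1 af by (simp add: \<kappa>_def)
  define vm where "vm = min (min v1 v2) v3"
  have vm: "vm > 0" "vm \<le> v1" "vm \<le> v2" "vm \<le> v3" using v by (simp_all add: vm_def)
  define W where "W = 6 + 18 * V / vm"
  have "18 * V / vm > 0" using V vm by simp
  hence W: "W > 0" unfolding W_def by linarith
  show ?thesis
  proof (rule that[OF W k])
    fix x :: "real \<Rightarrow> state" and t :: real assume sol: "is_solution p x" and x0: "x 0 \<in> Omega_star p" and t: "t \<ge> 0"
    define d0 where "d0 = dist (x 0) (dfe p)"
    have "d0 = norm (cS1 x 0 - Nm p, cI1 x 0 - 0, cS2 x 0 - Nf p, cI2 x 0 - 0, cS3 x 0 - Nh p, cI3 x 0 - 0)"
      unfolding d0_def dist_norm dfe_def by (subst x_split) simp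
    hence c0: "\<bar>cS1 x 0 - Nm p\<bar> \<le> d0" "\<bar>cI1 x 0\<bar> \<le> d0" "\<bar>cS2 x 0 - Nf p\<bar> \<le> d0"
      "\<bar>cI2 x 0\<bar> \<le> d0" "\<bar>cS3 x 0 - Nh p\<bar> \<le> d0" "\<bar>cI3 x 0\<bar> \<le> d0"
      using abs_comps[where a="cS1 x 0 - Nm p" and b="cI1 x 0 - 0" and c="cS2 x 0 - Nf p"
          and d="cI2 x 0 - 0" and e="cS3 x 0 - Nh p" and f="cI3 x 0 - 0"] by simp_all
    have d0: "d0 \<ge> 0" by (simp add: d0_def)
    have inv0: "0 \<le> cI1 x 0 \<and> 0 \<le> cI2 x 0 \<and> 0 \<le> cI3 x 0" using invariance[OF adm sol x0] by simp
    have invt: "0 \<le> cI1 x t \<and> 0 \<le> cI2 x t \<and> 0 \<le> cI3 x t" using invariance[OF adm sol x0 t] by simp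
    define E where "E = exp (- \<kappa> * t)"
    have E: "E > 0" by (simp add: E_def)
    have E1: "exp (- \<kappa>1 * t) \<le> E" unfolding E_def using t by (simp add: \<kappa>_def mult_right_mono)
    have E2: "exp (- mu p * t) \<le> E" unfolding E_def using t by (simp add: \<kappa>_def mult_right_mono)
    have L0: "v1 * cI1 x 0 + v2 * cI2 x 0 + v3 * cI3 x 0 \<le> 3 * V * d0"
    proof -
      have "v1 * cI1 x 0 \<le> V * d0" using v inv0 c0 V
        by (intro mult_mono) (auto simp: V_def)
      moreover have "v2 * cI2 x 0 \<le> V * d0" using v inv0 c0 V
        by (intro mult_mono) (auto simp: V_def)
      moreover have "v3 * cI3 x 0 \<le> V * d0" using v inv0 c0 V
        by (intro mult_mono) (auto simp: V_def)
      ultimately show ?thesis by simp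
    qed
    have Ld: "v1 * cI1 x t + v2 * cI2 x t + v3 * cI3 x t \<le> (v1 * cI1 x 0 + v2 * cI2 x 0 + v3 * cI3 x 0) * exp (- \<kappa>1 * t)"
      using I_decay[OF adm sol x0 t v m sl] by (simp add: \<kappa>1_def V_def)
    have "(v1 * cI1 x 0 + v2 * cI2 x 0 + v3 * cI3 x 0) * exp (- \<kappa>1 * t) \<le> (3 * V * d0) * E"
      using L0 E1 inv0 v V d0 by (intro mult_mono) (auto intro!: add_nonneg_nonneg)
    with Ld have Lt: "v1 * cI1 x t + v2 * cI2 x t + v3 * cI3 x t \<le> 3 * V * d0 * E" by linarith
    define Q where "Q = 3 * V * d0 * E / vm"
    have Ib: "cI1 x t \<le> Q" "cI2 x t \<le> Q" "cI3 x t \<le> Q"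
    proof -
      have "vm * cI1 x t \<le> v1 * cI1 x t" using vm invt by (intro mult_right_mono) auto
      moreover have "v2 * cI2 x t \<ge> 0" "v3 * cI3 x t \<ge> 0" using v invt by simp_all
      ultimately have "vm * cI1 x t \<le> 3 * V * d0 * E" using Lt by linarith
      thus "cI1 x t \<le> Q" unfolding Q_def using vm by (simp add: field_simps)
    next
      have "vm * cI2 x t \<le> v2 * cI2 x t" using vm invt by (intro mult_right_mono) auto
      moreover have "v1 * cI1 x t \<ge> 0" "v3 * cI3 x t \<ge> 0" using v invt by simp_all
      ultimately have "vm * cI2 x t \<le> 3 * V * d0 * E" using Lt by linarith
      thus "cI2 x t \<le> Q" unfolding Q_def using vm by (simp add: field_simps)
    next
      have "vm * cI3 x t \<le> v3 * cI3 x t" using vm invt by (intro mult_right_mono) auto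
      moreover have "v1 * cI1 x t \<ge> 0" "v2 * cI2 x t \<ge> 0" using v invt by simp_all
      ultimately have "vm * cI3 x t \<le> 3 * V * d0 * E" using Lt by linarith
      thus "cI3 x t \<le> Q" unfolding Q_def using vm by (simp add: field_simps)
    qed
    note Nd = N_decay[OF adm sol t]
    have Nb: "\<bar>cS1 x t + cI1 x t - Nm p\<bar> \<le> 2 * d0 * E" "\<bar>cS2 x t + cI2 x t - Nf p\<bar> \<le> 2 * d0 * E"
      "\<bar>cS3 x t + cI3 x t - Nh p\<bar> \<le> 2 * d0 * E"
    proof -
      have "\<bar>cS1 x 0 + cI1 x 0 - Nm p\<bar> \<le> 2 * d0" using c0 by linarith
      hence "\<bar>cS1 x 0 + cI1 x 0 - Nm p\<bar> * exp (- mu p * t) \<le> (2 * d0) * E"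
        using E2 d0 by (intro mult_mono) auto
      thus "\<bar>cS1 x t + cI1 x t - Nm p\<bar> \<le> 2 * d0 * E" using Nd(1) by linarith
    next
      have "\<bar>cS2 x 0 + cI2 x 0 - Nf p\<bar> \<le> 2 * d0" using c0 by linarith
      hence "\<bar>cS2 x 0 + cI2 x 0 - Nf p\<bar> * exp (- mu p * t) \<le> (2 * d0) * E"
        using E2 d0 by (intro mult_mono) auto
      thus "\<bar>cS2 x t + cI2 x t - Nf p\<bar> \<le> 2 * d0 * E" using Nd(2) by linarith
    next
      have "\<bar>cS3 x 0 + cI3 x 0 - Nh p\<bar> \<le> 2 * d0" using c0 by linarith
      hence "\<bar>cS3 x 0 + cI3 x 0 - Nh p\<bar> * exp (- mu p * t) \<le> (2 * d0) * E"
        using E2 d0 by (intro mult_mono) auto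
      thus "\<bar>cS3 x t + cI3 x t - Nh p\<bar> \<le> 2 * d0 * E" using Nd(3) by linarith
    qed
    have "dist (x t) (dfe p) \<le> \<bar>cS1 x t - Nm p\<bar> + \<bar>cI1 x t - 0\<bar> + \<bar>cS2 x t - Nf p\<bar> + \<bar>cI2 x t - 0\<bar>
        + \<bar>cS3 x t - Nh p\<bar> + \<bar>cI3 x t - 0\<bar>"
      unfolding dfe_def by (subst x_split) (rule dist6)
    also have "\<dots> \<le> 6 * d0 * E + 6 * Q" using Nb Ib invt by linarith
    also have "6 * d0 * E + 6 * Q = W * d0 * E" unfolding W_def Q_def using vm by (simp add: field_simps)
    finally show "dist (x t) (dfe p) \<le> W * dist (x 0) (dfe p) * exp (- \<kappa> * t)"
      by (simp add: d0_def E_def)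
  qed
qed

theorem theorem3:
  assumes "admissible p"
    and "Rc_hat p < 1"
  shows "GAS_in p (dfe p) (Omega_star p)"
proof -
  obtain W \<kappa> where W: "W > 0" and k: "\<kappa> > 0" and bd: "\<And>x t. is_solution p x \<Longrightarrow> x 0 \<in> Omega_star p \<Longrightarrow> t \<ge> 0 \<Longrightarrow>
       dist (x t) (dfe p) \<le> W * dist (x 0) (dfe p) * exp (- \<kappa> * t)"
    using main_bound[OF assms] by blast
  have stab: "\<forall>\<epsilon>>0. \<exists>\<delta>>0. \<forall>x. is_solution p x \<and> x 0 \<in> Omega_star p \<and> dist (x 0) (dfe p) < \<delta> \<longrightarrow>
          (\<forall>t\<ge>0. dist (x t) (dfe p) < \<epsilon>)"
  proof (intro allI impI)
    fix \<epsilon> :: real assume e: "\<epsilon> > 0"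
    show "\<exists>\<delta>>0. \<forall>x. is_solution p x \<and> x 0 \<in> Omega_star p \<and> dist (x 0) (dfe p) < \<delta> \<longrightarrow>
          (\<forall>t\<ge>0. dist (x t) (dfe p) < \<epsilon>)"
    proof (intro exI[of _ "\<epsilon> / W"] conjI allI impI)
      show "\<epsilon> / W > 0" using e W by simp
      fix x :: "real \<Rightarrow> state" and t :: real assume h: "is_solution p x \<and> x 0 \<in> Omega_star p \<and> dist (x 0) (dfe p) < \<epsilon> / W"
        and t: "0 \<le> t"
      have "dist (x t) (dfe p) \<le> W * dist (x 0) (dfe p) * exp (- \<kappa> * t)" using bd h t by blast
      also have "\<dots> \<le> W * dist (x 0) (dfe p) * 1"
        using W k t by (intro mult_left_mono) (auto simp: mult_nonneg_nonneg)
      also have "\<dots> < W * (\<epsilon> / W)"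
        using mult_strict_left_mono[of "dist (x 0) (dfe p)" "\<epsilon> / W" W] h W by linarith
      also have "\<dots> = \<epsilon>" using W by simp
      finally show "dist (x t) (dfe p) < \<epsilon>" .
    qed
  qed
  have attr: "\<forall>x. is_solution p x \<and> x 0 \<in> Omega_star p \<longrightarrow> (x \<longlongrightarrow> dfe p) at_top"
  proof (intro allI impI)
    fix x :: "real \<Rightarrow> state" assume h: "is_solution p x \<and> x 0 \<in> Omega_star p"
    have ev: "eventually (\<lambda>t::real. norm (x t - dfe p) \<le> W * dist (x 0) (dfe p) * exp (- \<kappa> * t)) at_top"
      unfolding eventually_at_top_linorder
      by (rule exI[of _ 0]) (use bd h in \<open>auto simp: dist_norm\<close>)
    have "((\<lambda>t::real. W * dist (x 0) (dfe p) * exp (- \<kappa> * t)) \<longlongrightarrow> W * dist (x 0) (dfe p) * 0) at_top"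
      by (intro tendsto_mult tendsto_const exp_decay_lim k)
    hence "((\<lambda>t::real. W * dist (x 0) (dfe p) * exp (- \<kappa> * t)) \<longlongrightarrow> 0) at_top" by simp
    from Lim_null_comparison[OF ev this] show "(x \<longlongrightarrow> dfe p) at_top"
      by (simp add: LIM_zero_iff)
  qed
  show ?thesis unfolding GAS_in_def using stab attr by blast
qed







end
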